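(* Let $\mathbb V\subset\mathbb W$ be Hilbert spaces with bounded inclusion, $\mathbb V$ dense in $\mathbb W$ and separable, and let $\mathcal L_N,\mathcal L:\mathbb V\to\mathbb W$ be bounded, self-adjoint (on $\mathbb W$ with dense domain $\mathbb V$), with pure-point spectrum. Let $\lambda$ be an eigenvalue of $\mathcal L$ of finite geometric multiplicity and $\delta>0$ such that $\lambda$ is at distance more than $3\delta$ from all other elements of $\sigma(\mathcal L)$. Suppose there is $N_0$ such that for $\delta\le|z-\lambda|\le2\delta$ and $N>N_0$, $z\,\mathrm{id}-\mathcal L_N$ is invertible on $\mathbb W$ and $\|(z\,\mathrm{id}-\mathcal L)^{-1}(\mathcal L-\mathcal L_N)v\|_{\mathbb W}\to0$, $\|(z\,\mathrm{id}-\mathcal L_N)^{-1}(\mathcal L-\mathcal L_N)u\|_{\mathbb W}\to0$ as $N\to\infty$, uniformly in such $z$, for all $\mathbb W$-normalized eigenfunctions $v$ of $\mathcal L_N$ and $u$ of $\mathcal L$ with eigenvalues in $\{|z-\lambda|\le\delta\}$. Assume further that there exist constants $t,N_0>0$ and a continuous function $R:[0,\infty)\to[0,\infty)$ such that $$\|(z\,\mathrm{id}-\mathcal L_N)^{-1}(\mathcal L-\mathcal L_N)u\|_{\mathbb W}\le R(|\lambda|)\max_{\mu\in\sigma(\mathcal L_N)}\frac1{|z-\mu|}\,N^{-t}$$ for $N>N_0$ and $z\notin\sigma(\mathcal L_N)$, whenever $u$ is a normalized eigenfunction of $\mathcal L$ associated to an eigenvalue of modulus at most $|\lambda|$. Then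 if $\lambda_N$ is an eigenvalue of $\mathcal L_N$ with $|\lambda_N-\lambda|<\delta$ for all $N$ sufficiently large, there exist $C,N_0'>1$ such that $|\lambda-\lambda_N|\le CR(|\lambda|)N^{-t}$ for $N>N_0'$. *)

theory Defs
  imports "HOL-Analysis.Analysis"
begin

text \<open>HOL has no class of complex vector spaces, so a complex vector space is modelled as a
real vector space 'w together with a complex structure J (multiplication by the imaginary
unit): J is real-linear and J (J x) = - x.\<close>

definition complex_structure :: "('w::real_vector \<Rightarrow> 'w) \<Rightarrow> bool" where
  "complex_structure J \<longleftrightarrow> linear J \<and> (\<forall>x. J (J x) = - x)"

definition scC :: "('w::real_vector \<Rightarrow> 'w) \<Rightarrow> complex \<Rightarrow> 'w \<Rightarrow> 'w" where
  "scC J c x = Re c *\<^sub>R x + Im c *\<^sub>R J x"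

definition complex_subspace :: "('a::real_vector \<Rightarrow> 'a) \<Rightarrow> 'a set \<Rightarrow> bool" where
  "complex_subspace J S \<longleftrightarrow> 0 \<in> S \<and> (\<forall>x\<in>S. \<forall>y\<in>S. x + y \<in> S) \<and> (\<forall>c. \<forall>x\<in>S. scC J c x \<in> S)"

definition complex_inner_on :: "('a::real_vector \<Rightarrow> 'a) \<Rightarrow> 'a set \<Rightarrow> ('a \<Rightarrow> 'a \<Rightarrow> complex) \<Rightarrow> bool" where
  "complex_inner_on J S ip \<longleftrightarrow>
     (\<forall>x\<in>S. \<forall>y\<in>S. \<forall>z\<in>S. ip (x + y) z = ip x z + ip y z) \<and>
     (\<forall>c. \<forall>x\<in>S. \<forall>y\<in>S. ip (scC J c x) y = c * ip x y) \<and>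
     (\<forall>x\<in>S. \<forall>y\<in>S. ip y x = cnj (ip x y)) \<and>
     (\<forall>x\<in>S. Im (ip x x) = 0 \<and> Re (ip x x) \<ge> 0) \<and>
     (\<forall>x\<in>S. ip x x = 0 \<longrightarrow> x = 0)"

definition hilbert_pair ::
  "('w::{real_normed_vector,complete_space} \<Rightarrow> 'w) \<Rightarrow> ('w \<Rightarrow> 'w \<Rightarrow> complex) \<Rightarrow> ('w \<Rightarrow> 'w \<Rightarrow> complex) \<Rightarrow> 'w set \<Rightarrow> bool" where
  "hilbert_pair J ipW ipV Vs \<longleftrightarrow>
     complex_structure J \<and>
     complex_inner_on J UNIV ipW \<and> (\<forall>x. norm x = sqrt (Re (ipW x x))) \<and>
     complex_subspace J Vs \<and> complex_inner_on J Vs ipV \<and>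
     (\<forall>X::nat \<Rightarrow> 'w. (\<forall>n. X n \<in> Vs) \<and>
          (\<forall>e>0. \<exists>M. \<forall>m\<ge>M. \<forall>n\<ge>M. sqrt (Re (ipV (X m - X n) (X m - X n))) < e)
          \<longrightarrow> (\<exists>l\<in>Vs. \<forall>e>0. \<exists>M. \<forall>n\<ge>M. sqrt (Re (ipV (X n - l) (X n - l))) < e)) \<and>
     (\<exists>D. countable D \<and> D \<subseteq> Vs \<and>
          (\<forall>x\<in>Vs. \<forall>e>0. \<exists>d\<in>D. sqrt (Re (ipV (x - d) (x - d))) < e)) \<and>
     closure Vs = UNIV \<and>
     (\<exists>c. \<forall>x\<in>Vs. norm x \<le> c * sqrt (Re (ipV x x)))"

definition bounded_op_VW :: "('w::real_normed_vector \<Rightarrow> 'w) \<Rightarrow> ('w \<Rightarrow> 'w \<Rightarrow> complex) \<Rightarrow> 'w set \<Rightarrow> ('w \<Rightarrow> 'w) \<Rightarrow> bool" where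
  "bounded_op_VW J ipV Vs L \<longleftrightarrow>
     (\<forall>x\<in>Vs. \<forall>y\<in>Vs. L (x + y) = L x + L y) \<and>
     (\<forall>c. \<forall>x\<in>Vs. L (scC J c x) = scC J c (L x)) \<and>
     (\<exists>K. \<forall>x\<in>Vs. norm (L x) \<le> K * sqrt (Re (ipV x x)))"

text \<open>Self-adjoint as an operator on W with (dense) domain V: symmetric, and the domain
of the adjoint is contained in V.\<close>
definition self_adjoint_on :: "('w::real_vector \<Rightarrow> 'w \<Rightarrow> complex) \<Rightarrow> 'w set \<Rightarrow> ('w \<Rightarrow> 'w) \<Rightarrow> bool" where
  "self_adjoint_on ipW Vs L \<longleftrightarrow>
     (\<forall>x\<in>Vs. \<forall>y\<in>Vs. ipW (L x) y = ipW x (L y)) \<and>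
     (\<forall>y z. (\<forall>x\<in>Vs. ipW (L x) y = ipW x z) \<longrightarrow> y \<in> Vs)"

definition eigvec :: "('w::real_vector \<Rightarrow> 'w) \<Rightarrow> 'w set \<Rightarrow> ('w \<Rightarrow> 'w) \<Rightarrow> complex \<Rightarrow> 'w \<Rightarrow> bool" where
  "eigvec J Vs L \<mu> v \<longleftrightarrow> v \<in> Vs \<and> v \<noteq> 0 \<and> L v = scC J \<mu> v"

definition eigenvalue_of :: "('w::real_vector \<Rightarrow> 'w) \<Rightarrow> 'w set \<Rightarrow> ('w \<Rightarrow> 'w) \<Rightarrow> complex \<Rightarrow> bool" where
  "eigenvalue_of J Vs L \<mu> \<longleftrightarrow> (\<exists>v. eigvec J Vs L \<mu> v)"

definition resolv :: "('w::real_normed_vector \<Rightarrow> 'w) \<Rightarrow> 'w set \<Rightarrow> ('w \<Rightarrow> 'w) \<Rightarrow> complex \<Rightarrow> 'w \<Rightarrow> 'w" where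
  "resolv J Vs L z = inv_into Vs (\<lambda>x. scC J z x - L x)"

definition resolvent_set :: "('w::real_normed_vector \<Rightarrow> 'w) \<Rightarrow> 'w set \<Rightarrow> ('w \<Rightarrow> 'w) \<Rightarrow> complex set" where
  "resolvent_set J Vs L = {z. bij_betw (\<lambda>x. scC J z x - L x) Vs UNIV \<and>
                            (\<exists>K. \<forall>y. norm (resolv J Vs L z y) \<le> K * norm y)}"

definition spec :: "('w::real_normed_vector \<Rightarrow> 'w) \<Rightarrow> 'w set \<Rightarrow> ('w \<Rightarrow> 'w) \<Rightarrow> complex set" where
  "spec J Vs L = - resolvent_set J Vs L"

text \<open>Pure-point spectrum: the eigenvectors span a dense subspace of W.  (The real span of
all eigenvectors coincides with their complex span, as eigenvectors are closed under complex
scaling.)\<close>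
definition pure_point :: "('w::real_normed_vector \<Rightarrow> 'w) \<Rightarrow> 'w set \<Rightarrow> ('w \<Rightarrow> 'w) \<Rightarrow> bool" where
  "pure_point J Vs L \<longleftrightarrow> closure (span {v. \<exists>\<mu>. eigvec J Vs L \<mu> v}) = UNIV"

definition finite_geom_mult :: "('w::real_normed_vector \<Rightarrow> 'w) \<Rightarrow> 'w set \<Rightarrow> ('w \<Rightarrow> 'w) \<Rightarrow> complex \<Rightarrow> bool" where
  "finite_geom_mult J Vs L \<mu> \<longleftrightarrow> (\<exists>B. finite B \<and> {v\<in>Vs. L v = scC J \<mu> v} \<subseteq> span B)"

end

theory Submission
  imports Defs
begin

locale cstr =
  fixes J :: "'w::real_normed_vector \<Rightarrow> 'w" and ip :: "'w \<Rightarrow> 'w \<Rightarrow> complex"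
  assumes cs: "complex_structure J" and ci: "complex_inner_on J UNIV ip"
    and nrm: "\<And>x. norm x = sqrt (Re (ip x x))"
begin

lemma J_lin: "linear J" using cs unfolding complex_structure_def by auto
lemma JJ[simp]: "J (J x) = - x" using cs unfolding complex_structure_def by auto
lemma J_add[simp]: "J (x + y) = J x + J y" using J_lin by (simp add: linear_add)
lemma J_scale[simp]: "J (r *\<^sub>R x) = r *\<^sub>R J x" using J_lin by (simp add: linear_scale)
lemma J_zero[simp]: "J 0 = 0" using J_lin by (simp add: linear_0)
lemma J_minus[simp]: "J (- x) = - J x" using J_lin by (simp add: linear_neg)
lemma J_diff[simp]: "J (x - y) = J x - J y" using J_lin by (simp add: linear_diff)

lemma scC_add_right: "scC J c (x + y) = scC J c x + scC J c y"
  by (simp add: scC_def algebra_simps)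
lemma scC_add_left: "scC J (a + b) x = scC J a x + scC J b x"
  by (simp add: scC_def algebra_simps)
lemma scC_mult: "scC J a (scC J b x) = scC J (a * b) x"
  by (simp add: scC_def algebra_simps)
lemma scC_comm: "scC J a (scC J b x) = scC J b (scC J a x)"
  by (simp add: scC_mult mult.commute)
lemma scC_of_real[simp]: "scC J (complex_of_real r) x = r *\<^sub>R x"
  by (simp add: scC_def)
lemma scC_one[simp]: "scC J 1 x = x" by (simp add: scC_def)
lemma scC_zero_left[simp]: "scC J 0 x = 0" by (simp add: scC_def)
lemma scC_zero_right[simp]: "scC J c 0 = 0" by (simp add: scC_def)
lemma scC_minus_right: "scC J c (- x) = - scC J c x" by (simp add: scC_def algebra_simps)
lemma scC_diff_right: "scC J c (x - y) = scC J c x - scC J c y" by (simp add: scC_def algebra_simps)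
lemma scC_diff_left: "scC J (a - b) x = scC J a x - scC J b x" by (simp add: scC_def algebra_simps)
lemma scC_minus_one: "scC J (-1) x = - x" by (simp add: scC_def)

lemma scC_sum: "scC J c (sum f S) = (\<Sum>i\<in>S. scC J c (f i))"
  by (induction S rule: infinite_finite_induct) (auto simp: scC_add_right)
lemma scC_scaleR: "scC J c (r *\<^sub>R x) = r *\<^sub>R scC J c x"
  using scC_comm[of c "complex_of_real r" x] by simp

lemmas ci' = ci[unfolded complex_inner_on_def]
lemma ip_add_left: "ip (x + y) z = ip x z + ip y z"
  using ci'[THEN conjunct1, rule_format, OF UNIV_I UNIV_I UNIV_I] .
lemma ip_scC_left: "ip (scC J c x) y = c * ip x y"
  using ci'[THEN conjunct2, THEN conjunct1, rule_format, OF UNIV_I UNIV_I] .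
lemma ip_sym: "ip y x = cnj (ip x y)"
  using ci'[THEN conjunct2, THEN conjunct2, THEN conjunct1, rule_format, OF UNIV_I UNIV_I] .
lemma ip_pos: "Im (ip x x) = 0" "Re (ip x x) \<ge> 0"
  using ci'[THEN conjunct2, THEN conjunct2, THEN conjunct2, THEN conjunct1, rule_format, OF UNIV_I] by auto
lemma ip_add_right: "ip z (x + y) = ip z x + ip z y"
  using ip_sym[of z "x+y"] ip_sym[of z x] ip_sym[of z y] ip_add_left[of x y z] by simp
lemma ip_scC_right: "ip x (scC J c y) = cnj c * ip x y"
  using ip_sym[of x "scC J c y"] ip_sym[of x y] ip_scC_left[of c y x] by simp
lemma ip_zero_left[simp]: "ip 0 y = 0"
  using ip_scC_left[of 0 0 y] by simp
lemma ip_zero_right[simp]: "ip y 0 = 0"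
  using ip_scC_right[of y 0 0] by simp
lemma ip_minus_left: "ip (- x) y = - ip x y"
  using ip_scC_left[of "-1" x y] by (simp add: scC_minus_one)
lemma ip_minus_right: "ip y (- x) = - ip y x"
  using ip_scC_right[of y "-1" x] by (simp add: scC_minus_one)
lemma ip_diff_left: "ip (x - z) y = ip x y - ip z y"
  using ip_add_left[of x "-z" y] by (simp add: ip_minus_left)
lemma ip_diff_right: "ip y (x - z) = ip y x - ip y z"
  using ip_add_right[of y x "-z"] by (simp add: ip_minus_right)
lemma ip_self: "ip x x = complex_of_real (norm x ^ 2)"
proof -
  have "norm x ^ 2 = Re (ip x x)" using nrm[of x] ip_pos[of x] by simp
  then show ?thesis using ip_pos[of x] by (simp add: complex_eq_iff)
qed
lemma norm_scC: "norm (scC J c x) = cmod c * norm x"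
proof -
  have cc: "c * cnj c = complex_of_real ((cmod c)^2)" by (rule complex_norm_square[symmetric])
  have "complex_of_real (norm (scC J c x) ^ 2) = c * cnj c * complex_of_real (norm x ^ 2)"
    unfolding ip_self[symmetric] ip_scC_left ip_scC_right by (simp add: mult.assoc)
  also have "\<dots> = complex_of_real ((cmod c * norm x) ^ 2)" unfolding cc
    by (simp add: power_mult_distrib del: of_real_power)
  finally have "norm (scC J c x) ^ 2 = (cmod c * norm x) ^ 2" by (simp only: of_real_eq_iff)
  then show ?thesis by (simp add: power2_eq_iff_nonneg)
qed

lemma cs_ineq: "cmod (ip x y) \<le> norm x * norm y"
proof (cases "y = 0")
  case True then show ?thesis by simp
next
  case False
  define n where "n = norm y ^ 2"
  have n: "n > 0" using False n_def by simp
  define a where "a = ip x y"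
  have yx: "ip y x = cnj a" unfolding a_def by (rule ip_sym)
  have yy: "ip y y = complex_of_real n" unfolding n_def by (rule ip_self)
  define w where "w = x - scC J (a / n) y"
  have "ip w w = ip x x - cnj (a/n) * a - (a/n) * cnj a + (a/n) * cnj (a/n) * n"
    unfolding w_def ip_diff_left ip_diff_right ip_scC_left ip_scC_right yx yy a_def[symmetric]
    by (simp add: algebra_simps)
  also have "\<dots> = ip x x - complex_of_real ((cmod a)^2 / n)"
  proof -
    have aa: "a * cnj a = complex_of_real ((cmod a)^2)" by (rule complex_norm_square[symmetric])
    have q1: "cnj (a/n) * a = complex_of_real ((cmod a)^2 / n)" using aa by (simp add: mult.commute)
    have q2: "(a/n) * cnj a = complex_of_real ((cmod a)^2 / n)" using aa by simp
    have q3: "(a/n) * cnj (a/n) * n = complex_of_real ((cmod a)^2 / n)"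
    proof -
      have "(a/n) * cnj (a/n) * n = (a * cnj a) / n" using n by (simp add: field_simps)
      also have "\<dots> = complex_of_real ((cmod a)^2) / complex_of_real n" by (simp only: aa)
      finally show ?thesis unfolding of_real_divide .
    qed
    show ?thesis unfolding q1 q2 q3 by (simp only: diff_add_cancel)
  qed
  finally have "Re (ip w w) = norm x ^ 2 - (cmod a)^2 / n" by (simp add: ip_self)
  with ip_pos(2)[of w] have "(cmod a)^2 \<le> norm x ^ 2 * n" using n by (simp add: field_simps)
  also have "\<dots> = (norm x * norm y)^2" by (simp add: n_def power_mult_distrib)
  finally show ?thesis unfolding a_def by (rule power2_le_imp_le) simp
qed


lemma ip_sum_right: "ip x (sum f S) = (\<Sum>i\<in>S. ip x (f i))"
  by (induction S rule: infinite_finite_induct) (auto simp: ip_add_right)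

lemma pyth2: assumes "ip x y = 0" shows "norm (x + y) ^ 2 = norm x ^ 2 + norm y ^ 2"
proof -
  have "ip y x = 0" using assms ip_sym[of y x] by simp
  then have "ip (x+y) (x+y) = ip x x + ip y y" using assms by (simp add: ip_add_left ip_add_right)
  then have "complex_of_real (norm (x+y)^2) = complex_of_real (norm x ^2) + complex_of_real (norm y^2)"
    by (simp only: ip_self)
  then show ?thesis by (simp only: of_real_add[symmetric] of_real_eq_iff)
qed

lemma pyth_sum: assumes "finite S" "\<And>i j. i \<in> S \<Longrightarrow> j \<in> S \<Longrightarrow> i \<noteq> j \<Longrightarrow> ip (f i) (f j) = 0"
  shows "norm (sum f S) ^ 2 = (\<Sum>i\<in>S. norm (f i) ^ 2)"
  using assms
proof (induction S rule: finite_induct)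
  case empty then show ?case by simp
next
  case (insert a F)
  have "ip (f a) (sum f F) = 0" unfolding ip_sum_right
    by (rule sum.neutral) (use insert in auto)
  then show ?case using insert by (simp add: pyth2)
qed

end

definition linop :: "('w::real_vector \<Rightarrow> 'w) \<Rightarrow> 'w set \<Rightarrow> ('w \<Rightarrow> 'w) \<Rightarrow> bool" where
  "linop J Vs L \<longleftrightarrow> (\<forall>x\<in>Vs. \<forall>y\<in>Vs. L (x + y) = L x + L y) \<and> (\<forall>c. \<forall>x\<in>Vs. L (scC J c x) = scC J c (L x))"

locale ops = cstr J ip for J :: "'w::real_normed_vector \<Rightarrow> 'w" and ip +
  fixes Vs assumes sub: "complex_subspace J Vs"
begin

lemmas sub' = sub[unfolded complex_subspace_def]
lemma Vs0[simp]: "0 \<in> Vs" using sub'[THEN conjunct1] .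
lemma Vs_add: "x \<in> Vs \<Longrightarrow> y \<in> Vs \<Longrightarrow> x + y \<in> Vs" using sub'[THEN conjunct2, THEN conjunct1] by blast
lemma Vs_scC: "x \<in> Vs \<Longrightarrow> scC J c x \<in> Vs" using sub'[THEN conjunct2, THEN conjunct2] by blast
lemma Vs_scale: "x \<in> Vs \<Longrightarrow> r *\<^sub>R x \<in> Vs" using Vs_scC[of x "complex_of_real r"] by simp
lemma Vs_minus: "x \<in> Vs \<Longrightarrow> - x \<in> Vs" using Vs_scC[of x "-1"] by (simp add: scC_minus_one)
lemma Vs_diff: "x \<in> Vs \<Longrightarrow> y \<in> Vs \<Longrightarrow> x - y \<in> Vs" using Vs_add[of x "-y"] Vs_minus by simp
lemma Vs_sum: "(\<And>i. i \<in> S \<Longrightarrow> f i \<in> Vs) \<Longrightarrow> sum f S \<in> Vs"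
  by (induction S rule: infinite_finite_induct) (auto simp: Vs_add)

context fixes L assumes lin: "linop J Vs L"
begin
lemma L_add: "x \<in> Vs \<Longrightarrow> y \<in> Vs \<Longrightarrow> L (x + y) = L x + L y" using lin[unfolded linop_def, THEN conjunct1] by blast
lemma L_scC: "x \<in> Vs \<Longrightarrow> L (scC J c x) = scC J c (L x)" using lin[unfolded linop_def, THEN conjunct2] by blast
lemma L_zero[simp]: "L 0 = 0" using L_scC[of 0 0] by simp
lemma L_scale: "x \<in> Vs \<Longrightarrow> L (r *\<^sub>R x) = r *\<^sub>R L x" using L_scC[of x "complex_of_real r"] by simp
lemma L_minus: "x \<in> Vs \<Longrightarrow> L (- x) = - L x" using L_scC[of x "-1"] by (simp add: scC_minus_one)
lemma L_diff: "x \<in> Vs \<Longrightarrow> y \<in> Vs \<Longrightarrow> L (x - y) = L x - L y"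
  using L_add[of x "-y"] L_minus[of y] Vs_minus[of y] by simp
lemma L_sum: "(\<And>i. i \<in> S \<Longrightarrow> f i \<in> Vs) \<Longrightarrow> L (sum f S) = (\<Sum>i\<in>S. L (f i))"
proof (induction S rule: infinite_finite_induct)
  case (insert x F) then show ?case by (simp add: L_add Vs_sum)
qed auto

lemma eig_in_spec: assumes "eigvec J Vs L \<mu> x" shows "\<mu> \<in> spec J Vs L"
  unfolding spec_def Compl_iff
proof
  assume "\<mu> \<in> resolvent_set J Vs L"
  then have "inj_on (\<lambda>x. scC J \<mu> x - L x) Vs" unfolding resolvent_set_def bij_betw_def by blast
  moreover have eq: "scC J \<mu> x - L x = scC J \<mu> 0 - L 0" using assms unfolding eigvec_def by simp
  ultimately have "x = 0" by (rule inj_onD) (use assms in \<open>auto simp: eigvec_def\<close>)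
  then show False using assms unfolding eigvec_def by simp
qed

lemma eig_eq_spec: assumes "eigenvalue_of J Vs L \<mu>" shows "\<mu> \<in> spec J Vs L"
  using assms eig_in_spec unfolding eigenvalue_of_def by blast

context fixes z assumes zr: "z \<in> resolvent_set J Vs L"
begin
lemma bij: "bij_betw (\<lambda>x. scC J z x - L x) Vs UNIV" using zr unfolding resolvent_set_def by blast
lemma T_in: "resolv J Vs L z y \<in> Vs"
proof -
  have "y \<in> (\<lambda>x. scC J z x - L x) ` Vs" using bij unfolding bij_betw_def by simp
  then show ?thesis unfolding resolv_def by (rule inv_into_into)
qed
lemma F_T: "scC J z (resolv J Vs L z y) - L (resolv J Vs L z y) = y"
  using bij_betw_inv_into_right[OF bij, of y] unfolding resolv_def by simp
lemma T_F: "x \<in> Vs \<Longrightarrow> resolv J Vs L z (scC J z x - L x) = x"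
  using bij_betw_inv_into_left[OF bij, of x] unfolding resolv_def by simp
lemma T_unique: "x \<in> Vs \<Longrightarrow> scC J z x - L x = y \<Longrightarrow> resolv J Vs L z y = x"
  using T_F by blast
lemma T_add: "resolv J Vs L z (a + b) = resolv J Vs L z a + resolv J Vs L z b"
proof (rule T_unique)
  show "resolv J Vs L z a + resolv J Vs L z b \<in> Vs" by (rule Vs_add[OF T_in T_in])
  have "scC J z (resolv J Vs L z a + resolv J Vs L z b) - L (resolv J Vs L z a + resolv J Vs L z b)
     = (scC J z (resolv J Vs L z a) - L (resolv J Vs L z a)) + (scC J z (resolv J Vs L z b) - L (resolv J Vs L z b))"
    unfolding L_add[OF T_in T_in] scC_add_right by simp
  then show "scC J z (resolv J Vs L z a + resolv J Vs L z b) - L (resolv J Vs L z a + resolv J Vs L z b) = a + b"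
    unfolding F_T .
qed
lemma T_scC: "resolv J Vs L z (scC J c a) = scC J c (resolv J Vs L z a)"
proof (rule T_unique)
  show "scC J c (resolv J Vs L z a) \<in> Vs" using T_in by (rule Vs_scC)
  have "scC J z (scC J c (resolv J Vs L z a)) - L (scC J c (resolv J Vs L z a))
     = scC J c (scC J z (resolv J Vs L z a) - L (resolv J Vs L z a))"
    unfolding L_scC[OF T_in] scC_diff_right scC_comm[of z c] ..
  then show "scC J z (scC J c (resolv J Vs L z a)) - L (scC J c (resolv J Vs L z a)) = scC J c a"
    unfolding F_T .
qed
lemma T_minus: "resolv J Vs L z (- a) = - resolv J Vs L z a"
  using T_scC[of "-1" a] by (simp add: scC_minus_one)
lemma T_diff: "resolv J Vs L z (a - b) = resolv J Vs L z a - resolv J Vs L z b"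
  using T_add[of a "-b"] T_minus[of b] by simp
lemma T_bound: "\<exists>K\<ge>0. \<forall>y. norm (resolv J Vs L z y) \<le> K * norm y"
proof -
  obtain K where K: "\<forall>y. norm (resolv J Vs L z y) \<le> K * norm y" using zr unfolding resolvent_set_def by blast
  have "norm (resolv J Vs L z y) \<le> max K 0 * norm y" for y
    using K[rule_format, of y] mult_right_mono[OF max.cobounded1[of K 0] norm_ge_zero[of y]] by linarith
  then show ?thesis by (intro exI[of _ "max K 0"]) auto
qed
end
end

lemma eig_real: assumes sym: "\<forall>x\<in>Vs. \<forall>y\<in>Vs. ip (L x) y = ip x (L y)"
  and e: "x \<in> Vs" "x \<noteq> 0" "L x = scC J \<mu> x" shows "Im \<mu> = 0"
proof -
  have "ip (L x) x = ip x (L x)" using sym e by blast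
  then have "\<mu> * ip x x = cnj \<mu> * ip x x" using e(3) by (simp add: ip_scC_left ip_scC_right)
  moreover have "ip x x \<noteq> 0" using e ip_self[of x] by simp
  ultimately have "\<mu> = cnj \<mu>" by simp
  then have "Im \<mu> = Im (cnj \<mu>)" by simp
  then show ?thesis by simp
qed

lemma eig_orth: assumes sym: "\<forall>x\<in>Vs. \<forall>y\<in>Vs. ip (L x) y = ip x (L y)"
  and e: "x \<in> Vs" "L x = scC J \<mu> x" "y \<in> Vs" "L y = scC J \<nu> y" "Im \<nu> = 0" "\<mu> \<noteq> \<nu>"
  shows "ip x y = 0"
proof -
  have "cnj \<nu> = \<nu>" using e(5) by (simp add: complex_eq_iff)
  moreover have "ip (L x) y = ip x (L y)" using sym e by blast
  ultimately have "\<mu> * ip x y = \<nu> * ip x y" using e(2,4) by (simp add: ip_scC_left ip_scC_right)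
  then show ?thesis using e(6) by simp
qed

end

theorem theoremt:
  fixes J :: "'w::{real_normed_vector,complete_space} \<Rightarrow> 'w"
    and ipW ipV :: "'w \<Rightarrow> 'w \<Rightarrow> complex"
    and Vs :: "'w set"
    and L :: "'w \<Rightarrow> 'w" and LN :: "nat \<Rightarrow> 'w \<Rightarrow> 'w"
    and lam :: complex and \<delta> :: real and t :: real and R :: "real \<Rightarrow> real"
    and lamN :: "nat \<Rightarrow> complex"
  assumes hp: "hilbert_pair J ipW ipV Vs"
    and L_bd: "bounded_op_VW J ipV Vs L" and L_sa: "self_adjoint_on ipW Vs L" and L_pp: "pure_point J Vs L"
    and LN_bd: "\<And>N. bounded_op_VW J ipV Vs (LN N)" and LN_sa: "\<And>N. self_adjoint_on ipW Vs (LN N)"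
    and LN_pp: "\<And>N. pure_point J Vs (LN N)"
    and lam_eig: "eigenvalue_of J Vs L lam" and lam_fin: "finite_geom_mult J Vs L lam"
    and delta_pos: "\<delta> > 0"
    and gap: "\<forall>\<mu>\<in>spec J Vs L. \<mu> \<noteq> lam \<longrightarrow> cmod (\<mu> - lam) > 3 * \<delta>"
    and inv: "\<exists>N0. \<forall>N. real N > N0 \<longrightarrow>
                 (\<forall>z. \<delta> \<le> cmod (z - lam) \<and> cmod (z - lam) \<le> 2 * \<delta> \<longrightarrow> z \<in> resolvent_set J Vs (LN N))"
    and conv1: "\<forall>e>0. \<exists>M. \<forall>N\<ge>M. \<forall>z. \<delta> \<le> cmod (z - lam) \<and> cmod (z - lam) \<le> 2 * \<delta> \<longrightarrow>
                 (\<forall>\<mu> v. eigvec J Vs (LN N) \<mu> v \<and> norm v = 1 \<and> cmod (\<mu> - lam) \<le> \<delta> \<longrightarrow>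
                    norm (resolv J Vs L z (L v - LN N v)) \<le> e)"
    and conv2: "\<forall>e>0. \<exists>M. \<forall>N\<ge>M. \<forall>z. \<delta> \<le> cmod (z - lam) \<and> cmod (z - lam) \<le> 2 * \<delta> \<longrightarrow>
                 (\<forall>\<mu> u. eigvec J Vs L \<mu> u \<and> norm u = 1 \<and> cmod (\<mu> - lam) \<le> \<delta> \<longrightarrow>
                    norm (resolv J Vs (LN N) z (L u - LN N u)) \<le> e)"
    and t_pos: "t > 0"
    and R_cont: "continuous_on {0..} R" and R_nonneg: "\<forall>x\<ge>0. R x \<ge> 0"
    and rate: "\<exists>N1>0. \<forall>N. real N > N1 \<longrightarrow> (\<forall>z. z \<notin> spec J Vs (LN N) \<longrightarrow>
                 (\<forall>\<mu> u. eigvec J Vs L \<mu> u \<and> norm u = 1 \<and> cmod \<mu> \<le> cmod lam \<longrightarrow>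
                    norm (resolv J Vs (LN N) z (L u - LN N u))
                      \<le> R (cmod lam) * (SUP \<mu>'\<in>spec J Vs (LN N). 1 / cmod (z - \<mu>')) * real N powr (- t)))"
    and lamN: "\<exists>M. \<forall>N\<ge>M. eigenvalue_of J Vs (LN N) (lamN N) \<and> cmod (lamN N - lam) < \<delta>"
  shows "\<exists>C>1. \<exists>N0'>1. \<forall>N. real N > N0' \<longrightarrow>
           cmod (lam - lamN N) \<le> C * R (cmod lam) * real N powr (- t)"
proof -
  note hp' = hp[unfolded hilbert_pair_def]
  have cs: "complex_structure J" using hp'[THEN conjunct1] .
  have ci: "complex_inner_on J UNIV ipW" using hp'[THEN conjunct2, THEN conjunct1] .
  have nrm: "\<forall>x. norm x = sqrt (Re (ipW x x))" using hp'[THEN conjunct2, THEN conjunct2, THEN conjunct1] .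
  have sub: "complex_subspace J Vs" using hp'[THEN conjunct2, THEN conjunct2, THEN conjunct2, THEN conjunct1] .
  interpret ops J ipW Vs
    by unfold_locales (use cs ci nrm sub in auto)
  have linL: "linop J Vs L" unfolding linop_def
    using conjI[OF L_bd[unfolded bounded_op_VW_def, THEN conjunct1] L_bd[unfolded bounded_op_VW_def, THEN conjunct2, THEN conjunct1]] .
  have linLN: "\<And>N. linop J Vs (LN N)" unfolding linop_def
    using conjI[OF LN_bd[unfolded bounded_op_VW_def, THEN conjunct1] LN_bd[unfolded bounded_op_VW_def, THEN conjunct2, THEN conjunct1]] .
  have symL: "\<forall>x\<in>Vs. \<forall>y\<in>Vs. ipW (L x) y = ipW x (L y)" using L_sa[unfolded self_adjoint_on_def] by (rule conjunct1)
  have symLN: "\<And>N. \<forall>x\<in>Vs. \<forall>y\<in>Vs. ipW (LN N x) y = ipW x (LN N y)"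
    using LN_sa[unfolded self_adjoint_on_def] by (rule conjunct1)
  obtain u0 where u0: "eigvec J Vs L lam u0" using lam_eig unfolding eigenvalue_of_def by blast
  have lamR: "Im lam = 0" using eig_real[OF symL] u0 unfolding eigvec_def by blast
  define z0 where "z0 = lam + complex_of_real (3/2*\<delta>)"
  have z0d: "cmod (z0 - lam) = 3/2*\<delta>" using delta_pos by (simp add: z0_def)
  have z0L: "z0 \<in> resolvent_set J Vs L"
  proof (rule ccontr)
    assume "z0 \<notin> resolvent_set J Vs L" then have "z0 \<in> spec J Vs L" by (simp add: spec_def)
    moreover have "z0 \<noteq> lam" using z0d delta_pos by auto
    ultimately have "cmod (z0 - lam) > 3 * \<delta>" using gap by blast
    then show False using z0d delta_pos by simp
  qed
  obtain K where K0: "K \<ge> 0" and K: "\<And>y. norm (resolv J Vs L z0 y) \<le> K * norm y"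
    using T_bound[OF linL z0L] by blast
  obtain Na where Na: "\<And>N z. real N > Na \<Longrightarrow> \<delta> \<le> cmod (z - lam) \<Longrightarrow> cmod (z - lam) \<le> 2 * \<delta>
      \<Longrightarrow> z \<in> resolvent_set J Vs (LN N)" using inv by blast
  have "(1/20::real) > 0" by simp
  then obtain M1 where M1: "\<forall>N\<ge>M1. \<forall>z. \<delta> \<le> cmod (z - lam) \<and> cmod (z - lam) \<le> 2 * \<delta> \<longrightarrow>
                 (\<forall>\<mu> v. eigvec J Vs (LN N) \<mu> v \<and> norm v = 1 \<and> cmod (\<mu> - lam) \<le> \<delta> \<longrightarrow>
                    norm (resolv J Vs L z (L v - LN N v)) \<le> 1/20)" using conv1 by blast
  obtain N1 where N1pos: "N1 > 0" and N1: "\<forall>N. real N > N1 \<longrightarrow> (\<forall>z. z \<notin> spec J Vs (LN N) \<longrightarrow>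
                 (\<forall>\<mu> u. eigvec J Vs L \<mu> u \<and> norm u = 1 \<and> cmod \<mu> \<le> cmod lam \<longrightarrow>
                    norm (resolv J Vs (LN N) z (L u - LN N u))
                      \<le> R (cmod lam) * (SUP \<mu>'\<in>spec J Vs (LN N). 1 / cmod (z - \<mu>')) * real N powr (- t)))"
    using rate by blast
  obtain M2 where M2: "\<And>N. N \<ge> M2 \<Longrightarrow> eigenvalue_of J Vs (LN N) (lamN N) \<and> cmod (lamN N - lam) < \<delta>"
    using lamN by blast
  define N0' where "N0' = max (max Na N1) (real (max M1 M2)) + 2"
  have N0'1: "N0' > 1" using N1pos unfolding N0'_def by simp
  have main: "cmod (lam - lamN N) \<le> 10 * R (cmod lam) * real N powr (- t)" if NN: "real N > N0'" for N
  proof -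
    have NNa: "real N > Na" and NN1: "real N > N1" and NM1: "N \<ge> M1" and NM2: "N \<ge> M2"
      using NN unfolding N0'_def by auto
    define lN where "lN = lamN N"
    have lNe: "eigenvalue_of J Vs (LN N) lN" and lNd: "cmod (lN - lam) < \<delta>"
      using M2[OF NM2] unfolding lN_def by auto
    obtain w where w: "eigvec J Vs (LN N) lN w" using lNe unfolding eigenvalue_of_def by blast
    have lNR: "Im lN = 0" using eig_real[OF symLN[of N]] w unfolding eigvec_def by blast
    define v where "v = (1 / norm w) *\<^sub>R w"
    have w0: "w \<noteq> 0" "w \<in> Vs" and wL: "LN N w = scC J lN w" using w unfolding eigvec_def by auto
    have vV: "v \<in> Vs" unfolding v_def using w0 Vs_scale by blast
    have vn: "norm v = 1" unfolding v_def using w0 by simp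
    have vL: "LN N v = scC J lN v" unfolding v_def using L_scale[OF linLN w0(2)] wL scC_scaleR by simp
    have v0: "v \<noteq> 0" using vn by auto
    have z0LN: "z0 \<in> resolvent_set J Vs (LN N)" using Na[OF NNa] z0d delta_pos by auto
    have h1: "\<delta> \<le> cmod (z0 - lam) \<and> cmod (z0 - lam) \<le> 2 * \<delta>" using z0d delta_pos by simp
    have h2: "eigvec J Vs (LN N) lN v \<and> norm v = 1 \<and> cmod (lN - lam) \<le> \<delta>"
      using vV v0 vL vn lNd unfolding eigvec_def by simp
    have c1: "norm (resolv J Vs L z0 (L v - LN N v)) \<le> 1/20"
      using M1 NM1 h1 h2 by blast
    define T where "T = resolv J Vs L z0"
    define G where "G x = scC J (z0 - lN) (T x) - x" for x
    have Gv: "G v = T (L v - LN N v)"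
    proof -
      have e1: "L v - LN N v = scC J (z0 - lN) v - (scC J z0 v - L v)"
        unfolding vL scC_diff_left by simp
      have "T (L v - LN N v) = T (scC J (z0 - lN) v) - T (scC J z0 v - L v)"
        unfolding e1 T_def by (rule T_diff[OF linL z0L])
      also have "\<dots> = scC J (z0 - lN) (T v) - v"
        unfolding T_def T_scC[OF linL z0L] T_F[OF linL z0L vV] ..
      finally show ?thesis by (simp add: G_def)
    qed
    have Gdiff: "G (a - b) = G a - G b" for a b
      unfolding G_def T_def T_diff[OF linL z0L] scC_diff_right by simp
    have Gadd: "G (a + b) = G a + G b" for a b
      unfolding G_def T_def T_add[OF linL z0L] scC_add_right by simp
    have G0: "G 0 = 0" using Gdiff[of 0 0] by simp
    have Gsum: "G (sum f S) = (\<Sum>i\<in>S. G (f i))" for f and S :: "complex set"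
      by (induction S rule: infinite_finite_induct) (simp_all add: Gadd G0)
    define A where "A = cmod (z0 - lN) * K + 1"
    have A1: "A \<ge> 1" unfolding A_def using K0 by simp
    have GA: "norm (G x) \<le> A * norm x" for x
    proof -
      have "norm (G x) \<le> norm (scC J (z0 - lN) (T x)) + norm x" unfolding G_def by (rule norm_triangle_ineq4)
      also have "\<dots> \<le> cmod (z0 - lN) * (K * norm x) + norm x"
        unfolding norm_scC T_def by (simp add: K mult_left_mono)
      finally show ?thesis unfolding A_def by (simp add: algebra_simps)
    qed
    define \<eta> where "\<eta> = 1 / (8 * (1 + 5/2 * A))"
    have \<eta>0: "\<eta> > 0" unfolding \<eta>_def using A1 by simp
    define EV where "EV = {x. \<exists>\<mu>. eigvec J Vs L \<mu> x}"
    have "v \<in> closure (span EV)" using L_pp unfolding pure_point_def EV_def by simp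
    then obtain s where sS: "s \<in> span EV" and sd: "dist s v < \<eta>"
      using \<eta>0 unfolding closure_approachable by blast
    obtain B r where B: "finite B" "B \<subseteq> EV" and sB: "s = (\<Sum>x\<in>B. r x *\<^sub>R x)"
      using sS unfolding span_explicit by blast
    define mu where "mu x = (SOME \<mu>. eigvec J Vs L \<mu> x)" for x
    have muB: "eigvec J Vs L (mu x) x" if "x \<in> B" for x
      using B(2) that unfolding EV_def mu_def by (auto intro: someI_ex)
    define Ms where "Ms = mu ` B"
    have Msf: "finite Ms" unfolding Ms_def using B(1) by simp
    define y where "y m = (\<Sum>x\<in>{x\<in>B. mu x = m}. r x *\<^sub>R x)" for m
    have s_y: "s = (\<Sum>m\<in>Ms. y m)" unfolding sB y_def Ms_def
      by (rule sum.group[symmetric]) (use B(1) in auto)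
    have yV: "y m \<in> Vs" for m
      unfolding y_def by (rule Vs_sum) (use muB in \<open>auto simp: eigvec_def intro: Vs_scale\<close>)
    have yL: "L (y m) = scC J m (y m)" for m
    proof -
      have "L (y m) = (\<Sum>x\<in>{x\<in>B. mu x = m}. L (r x *\<^sub>R x))"
        unfolding y_def by (rule L_sum[OF linL]) (use muB in \<open>auto simp: eigvec_def intro: Vs_scale\<close>)
      also have "\<dots> = (\<Sum>x\<in>{x\<in>B. mu x = m}. scC J m (r x *\<^sub>R x))"
        by (rule sum.cong) (use muB in \<open>auto simp: eigvec_def L_scale[OF linL] scC_scaleR\<close>)
      finally show ?thesis unfolding y_def scC_sum .
    qed
    have mR: "Im m = 0" if "m \<in> Ms" for m
      using that eig_real[OF symL] muB unfolding Ms_def eigvec_def by blast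
    have mfar: "cmod (m - lam) > 3 * \<delta>" if mM: "m \<in> Ms" "m \<noteq> lam" for m
    proof -
      obtain x where x: "x \<in> B" "m = mu x" using mM(1) unfolding Ms_def by blast
      have "m \<in> spec J Vs L" using eig_in_spec[OF linL muB[OF x(1)]] x(2) by simp
      then show ?thesis using gap mM(2) by blast
    qed
    have z0m: "z0 \<noteq> m" if "m \<in> Ms" for m
    proof
      assume "z0 = m"
      then show False using mfar[OF that] z0d delta_pos
        by (cases "m = lam") auto
    qed
    define c where "c m = (z0 - lN) / (z0 - m) - 1" for m
    have Ty: "T (y m) = scC J (1 / (z0 - m)) (y m)" if "m \<in> Ms" for m
      unfolding T_def
    proof (rule T_unique[OF linL z0L])
      show "scC J (1 / (z0 - m)) (y m) \<in> Vs" by (rule Vs_scC[OF yV])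
      have "scC J z0 (scC J (1 / (z0 - m)) (y m)) - L (scC J (1 / (z0 - m)) (y m))
          = scC J (z0 * (1 / (z0 - m)) - (1 / (z0 - m)) * m) (y m)"
        unfolding L_scC[OF linL yV] yL scC_mult scC_diff_left ..
      also have "z0 * (1 / (z0 - m)) - (1 / (z0 - m)) * m = 1"
      proof -
        have d: "z0 - m \<noteq> 0" using z0m[OF that] by simp
        have "(1 / (z0 - m)) * (z0 - m) = 1" using d by simp
        then show ?thesis by (simp only: right_diff_distrib mult.commute[of z0])
      qed
      finally show "scC J z0 (scC J (1 / (z0 - m)) (y m)) - L (scC J (1 / (z0 - m)) (y m)) = y m"
        by simp
    qed
    have Gy: "G (y m) = scC J (c m) (y m)" if "m \<in> Ms" for m
      unfolding G_def Ty[OF that] scC_mult c_def scC_diff_left by simp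
    have Gs: "G s = (\<Sum>m\<in>Ms. scC J (c m) (y m))"
      unfolding s_y Gsum by (rule sum.cong) (auto simp: Gy)
    have orthy: "ipW (y m) (y m') = 0" if "m \<in> Ms" "m' \<in> Ms" "m \<noteq> m'" for m m'
      by (rule eig_orth[OF symL yV yL yV yL mR[OF that(2)] that(3)])
    have Gs2: "norm (G s) ^ 2 = (\<Sum>m\<in>Ms. norm (scC J (c m) (y m)) ^ 2)"
      unfolding Gs by (rule pyth_sum[OF Msf]) (simp add: ip_scC_left ip_scC_right orthy)
    define Ms' where "Ms' = Ms - {lam}"
    have Ms'f: "finite Ms'" unfolding Ms'_def using Msf by simp
    define wv where "wv = (\<Sum>m\<in>Ms'. y m)"
    have wv2: "norm wv ^ 2 = (\<Sum>m\<in>Ms'. norm (y m) ^ 2)"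
      unfolding wv_def by (rule pyth_sum[OF Ms'f]) (auto simp: Ms'_def orthy)
    have cb: "cmod (c m) \<ge> 2/5" if "m \<in> Ms'" for m
    proof -
      have mM: "m \<in> Ms" "m \<noteq> lam" using that unfolding Ms'_def by auto
      define d where "d = cmod (m - lam)"
      have d: "d > 3 * \<delta>" using mfar[OF mM] d_def by simp
      have "c m = (m - lN) / (z0 - m)" unfolding c_def using z0m[OF mM(1)] by (simp add: field_simps)
      then have cm: "cmod (c m) = cmod (m - lN) / cmod (z0 - m)" by (simp add: norm_divide)
      have n1: "cmod (m - lN) \<ge> d - \<delta>"
        using norm_triangle_ineq2[of "m - lam" "lN - lam"] lNd unfolding d_def by (simp add: algebra_simps)
      have n2: "cmod (z0 - m) \<le> d + 3/2 * \<delta>"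
        using norm_triangle_ineq4[of "z0 - lam" "m - lam"] z0d unfolding d_def by (simp add: algebra_simps)
      have n3: "cmod (z0 - m) > 0" using z0m[OF mM(1)] by simp
      have "2/5 * cmod (z0 - m) \<le> cmod (m - lN)" using n1 n2 d delta_pos by linarith
      then show ?thesis unfolding cm using n3 by (simp add: field_simps)
    qed
    have "(2/5 * norm wv) ^ 2 = (\<Sum>m\<in>Ms'. (2/5)^2 * norm (y m) ^ 2)"
      unfolding power_mult_distrib wv2 sum_distrib_left ..
    also have "\<dots> \<le> (\<Sum>m\<in>Ms'. norm (scC J (c m) (y m)) ^ 2)"
    proof (rule sum_mono)
      fix m assume "m \<in> Ms'"
      then have "2/5 * norm (y m) \<le> cmod (c m) * norm (y m)" using cb by (intro mult_right_mono) auto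
      then show "(2/5)^2 * norm (y m) ^ 2 \<le> norm (scC J (c m) (y m)) ^ 2"
        unfolding norm_scC power_mult_distrib[symmetric] by (simp add: power_mono)
    qed
    also have "\<dots> \<le> (\<Sum>m\<in>Ms. norm (scC J (c m) (y m)) ^ 2)"
      by (rule sum_mono2[OF Msf]) (auto simp: Ms'_def)
    also have "\<dots> = norm (G s) ^ 2" using Gs2 by simp
    finally have "2/5 * norm wv \<le> norm (G s)" by (rule power2_le_imp_le) simp
    moreover have Gsb: "norm (G s) \<le> 1/20 + A * \<eta>"
    proof -
      have "G s = G v + G (s - v)" using Gdiff[of s v] by simp
      then have "norm (G s) \<le> norm (G v) + norm (G (s - v))" by (simp add: norm_triangle_ineq)
      moreover have "norm (G v) \<le> 1/20" using c1 Gv T_def by simp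
      moreover have "norm (G (s - v)) \<le> A * \<eta>"
        using GA[of "s - v"] sd A1 by (smt (verit) dist_norm mult_left_mono)
      ultimately show ?thesis by linarith
    qed
    ultimately have "norm wv \<le> 5/2 * norm (G s)" by linarith
    then have wvb: "norm wv \<le> 5/2 * (1/20 + A * \<eta>)"
      using mult_left_mono[OF Gsb, of "5/2"] by linarith
    define p where "p = (if lam \<in> Ms then y lam else 0)"
    have s_pw: "s = p + wv"
    proof (cases "lam \<in> Ms")
      case True then show ?thesis unfolding s_y p_def wv_def Ms'_def using sum.remove[OF Msf True] by simp
    next
      case False then show ?thesis unfolding s_y p_def wv_def Ms'_def by simp
    qed
    have pV: "p \<in> Vs" unfolding p_def using yV by simp
    have pL: "L p = scC J lam p" unfolding p_def using yL by (simp add: L_zero[OF linL])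
    have vp: "norm (v - p) \<le> 1/4"
    proof -
      have "v - p = (v - s) + wv" using s_pw by simp
      then have "norm (v - p) \<le> norm (v - s) + norm wv" by (metis norm_triangle_ineq)
      also have "\<dots> \<le> \<eta> + 5/2 * (1/20 + A * \<eta>)" 
      proof (rule add_mono)
        show "norm (v - s) \<le> \<eta>" using sd by (simp add: dist_norm norm_minus_commute)
      qed (rule wvb)
      also have "\<dots> = 1/8 + \<eta> * (1 + 5/2 * A)" by (simp add: algebra_simps)
      also have "\<eta> * (1 + 5/2 * A) = 1/8" unfolding \<eta>_def using A1 by simp
      finally show ?thesis by simp
    qed
    have pn: "norm p \<ge> 3/4"
      using norm_triangle_ineq[of "v - p" p] vn vp by simp
    have p0: "p \<noteq> 0" using pn by auto
    define u where "u = (1 / norm p) *\<^sub>R p"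
    have uV: "u \<in> Vs" unfolding u_def using pV Vs_scale by blast
    have un: "norm u = 1" unfolding u_def using p0 by simp
    have uL: "L u = scC J lam u" unfolding u_def using L_scale[OF linL pV] pL scC_scaleR by simp
    have ueig: "eigvec J Vs L lam u" using uV un uL unfolding eigvec_def by auto
    have ipuv: "cmod (ipW u v) \<ge> 1/2"
    proof -
      have "ipW u p = complex_of_real (norm p)"
        unfolding u_def scC_of_real[symmetric] ip_scC_left ip_self using pn
        by (simp add: power2_eq_square)
      moreover have "ipW u v = ipW u p + ipW u (v - p)" by (simp add: ip_diff_right)
      moreover have "cmod (ipW u (v - p)) \<le> 1/4" using cs_ineq[of u "v - p"] un vp by simp
      ultimately have "cmod (ipW u v) \<ge> norm p - 1/4"
        using norm_diff_ineq[of "ipW u p" "ipW u (v - p)"] by simp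
      then show ?thesis using pn by simp
    qed
    have z0nsp: "z0 \<notin> spec J Vs (LN N)" using z0LN unfolding spec_def by simp
    define f where "f = resolv J Vs (LN N) z0 (L u - LN N u)"
    have h3: "eigvec J Vs L lam u \<and> norm u = 1 \<and> cmod lam \<le> cmod lam" using ueig un by simp
    have fb: "norm f \<le> R (cmod lam) * (SUP \<mu>'\<in>spec J Vs (LN N). 1 / cmod (z0 - \<mu>')) * real N powr (- t)"
      using N1 NN1 z0nsp h3 unfolding f_def by blast
    have SUPb: "(SUP \<mu>'\<in>spec J Vs (LN N). 1 / cmod (z0 - \<mu>')) \<le> 2 / \<delta>"
    proof (rule cSUP_least)
      show "spec J Vs (LN N) \<noteq> {}" using eig_eq_spec[OF linLN lNe] by blast
    next
      fix \<mu>' assume m: "\<mu>' \<in> spec J Vs (LN N)"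
      have "cmod (z0 - \<mu>') \<ge> \<delta> / 2"
      proof (rule ccontr)
        assume a: "\<not> cmod (z0 - \<mu>') \<ge> \<delta> / 2"
        have t1: "cmod (z0 - lam) \<le> cmod (z0 - \<mu>') + cmod (\<mu>' - lam)"
          using norm_triangle_ineq[of "z0 - \<mu>'" "\<mu>' - lam"] by simp
        have t2: "cmod (\<mu>' - lam) \<le> cmod (\<mu>' - z0) + cmod (z0 - lam)"
          using norm_triangle_ineq[of "\<mu>' - z0" "z0 - lam"] by simp
        have t3: "cmod (\<mu>' - z0) = cmod (z0 - \<mu>')" by (rule norm_minus_commute)
        have "cmod (\<mu>' - lam) \<ge> \<delta>" using t1 z0d a by linarith
        moreover have "cmod (\<mu>' - lam) \<le> 2 * \<delta>" using t2 t3 z0d a by linarith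
        ultimately have "\<mu>' \<in> resolvent_set J Vs (LN N)" using Na[OF NNa] by blast
        then show False using m unfolding spec_def by simp
      qed
      moreover have "cmod (z0 - \<mu>') > 0" using calculation delta_pos by linarith
      ultimately show "1 / cmod (z0 - \<mu>') \<le> 2 / \<delta>" using delta_pos by (simp add: field_simps)
    qed
    have Rn: "R (cmod lam) \<ge> 0" using R_nonneg by simp
    have Pn: "real N powr (- t) \<ge> 0" by simp
    have fb2: "norm f \<le> R (cmod lam) * (2 / \<delta>) * real N powr (- t)"
      using fb SUPb Rn Pn by (smt (verit) mult_left_mono mult_right_mono)
    define T1 where "T1 = resolv J Vs (LN N) z0"
    have f_eq: "f = u - scC J (z0 - lam) (T1 u)"
    proof -
      have e1: "L u - LN N u = (scC J z0 u - LN N u) - scC J (z0 - lam) u"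
        unfolding uL scC_diff_left by simp
      have "f = T1 (scC J z0 u - LN N u) - T1 (scC J (z0 - lam) u)"
        unfolding f_def e1 T1_def by (rule T_diff[OF linLN z0LN])
      also have "\<dots> = u - scC J (z0 - lam) (T1 u)"
        unfolding T1_def T_scC[OF linLN z0LN] T_F[OF linLN z0LN uV] ..
      finally show ?thesis .
    qed
    have z0lN: "z0 - lN \<noteq> 0"
    proof
      assume "z0 - lN = 0"
      then have "cmod (z0 - lam) = cmod (lN - lam)" by simp
      then show False using z0d lNd delta_pos by linarith
    qed
    have z0lN2: "cmod (z0 - lN) \<le> 5/2 * \<delta>"
      using norm_triangle_ineq[of "z0 - lam" "lam - lN"] z0d lNd
      by (simp add: algebra_simps norm_minus_commute)
    have T1ip: "ipW (T1 u) v * (z0 - lN) = ipW u v"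
    proof -
      have xV: "T1 u \<in> Vs" unfolding T1_def by (rule T_in[OF linLN z0LN])
      have "ipW u v = ipW (scC J z0 (T1 u) - LN N (T1 u)) v"
        unfolding T1_def using F_T[OF linLN z0LN, of u] by simp
      also have "\<dots> = z0 * ipW (T1 u) v - ipW (T1 u) (LN N v)"
        unfolding ip_diff_left ip_scC_left using symLN[of N] xV vV by simp
      also have "\<dots> = z0 * ipW (T1 u) v - cnj lN * ipW (T1 u) v"
        unfolding vL ip_scC_right ..
      also have "cnj lN = lN" using lNR by (simp add: complex_eq_iff)
      finally show ?thesis by (simp add: algebra_simps)
    qed
    have fv: "ipW f v = ipW u v * (lam - lN) / (z0 - lN)"
    proof -
      have "ipW f v = ipW u v - (z0 - lam) * ipW (T1 u) v"
        unfolding f_eq ip_diff_left ip_scC_left ..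
      also have "ipW (T1 u) v = ipW u v / (z0 - lN)" using T1ip z0lN by (simp add: field_simps)
      finally show ?thesis using z0lN by (simp add: field_simps)
    qed
    have fvn: "cmod (ipW f v) \<le> norm f" using cs_ineq[of f v] vn by simp
    have eqc: "cmod (ipW f v) = cmod (ipW u v) * cmod (lam - lN) / cmod (z0 - lN)"
      unfolding fv by (simp add: norm_mult norm_divide)
    have pos: "cmod (z0 - lN) > 0" using z0lN by simp
    have "cmod (ipW u v) * cmod (lam - lN) \<le> norm f * cmod (z0 - lN)"
      using fvn pos unfolding eqc by (simp add: divide_le_eq)
    also have "\<dots> \<le> norm f * (5/2 * \<delta>)" using z0lN2 by (intro mult_left_mono) auto
    finally have "cmod (ipW u v) * cmod (lam - lN) \<le> norm f * (5/2 * \<delta>)" .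
    moreover have "1/2 * cmod (lam - lN) \<le> cmod (ipW u v) * cmod (lam - lN)"
      using ipuv by (intro mult_right_mono) auto
    moreover have "norm f * (5/2 * \<delta>) = 5/2 * (\<delta> * norm f)" by (simp add: algebra_simps)
    ultimately have "cmod (lam - lN) \<le> 5 * (\<delta> * norm f)" by linarith
    also have "\<dots> \<le> 5 * (\<delta> * (R (cmod lam) * (2 / \<delta>) * real N powr (- t)))"
      using fb2 delta_pos by (intro mult_left_mono) auto
    also have "\<dots> = 10 * R (cmod lam) * real N powr (- t)" using delta_pos by (simp add: field_simps)
    finally show ?thesis unfolding lN_def .
  qed
  show ?thesis
    by (rule exI[of _ "10::real"], simp, rule exI[of _ N0'], use N0'1 main in auto)
qed

end
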